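(* Let $\Lambda$ be a singly aligned left cancellative small category. Then \[S_\Lambda=\{\alpha\beta^*:\alpha,\beta\in\Lambda,\ s(\alpha)=s(\beta)\}\cup\{0\}.\] Moreover, for $\alpha,\beta,\gamma,\tau\in\Lambda$ with $s(\alpha)=s(\beta)$ and $s(\gamma)=s(\tau)$, we have $\alpha\beta^*=\gamma\tau^*$ if and only if there is an invertible $u\in\Lambda$ with $\alpha u=\gamma$ and $\beta u=\tau$. The product in $S_\Lambda$ is given by \[\alpha\beta^*\gamma\tau^*=\begin{cases}\alpha\gamma_1(\tau\beta_1)^* & \text{if }\beta\Lambda\cap\gamma\Lambda=\rho\Lambda\text{ with }\rho=\beta\beta_1=\gamma\gamma_1,\\ 0&\text{otherwise,}\end{cases}\] and all products involving $0$ equal $0$.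
   Context: $\Lambda$ is a small category (objects $\Lambda^0$, range $r$, source $s$), left cancellative ($\alpha\beta=\alpha\gamma\Rightarrow\beta=\gamma$), and singly aligned: for all $\alpha,\beta$, $\alpha\Lambda\cap\beta\Lambda$ is either empty or equal to $\rho\Lambda$ for some $\rho\in\Lambda$, where $\alpha\Lambda=\{\alpha\beta:s(\alpha)=r(\beta)\}$. An element $u$ is invertible if $uv=r(u)$ for some $v$. Each $\alpha\in\Lambda$ is the partial bijection $s(\alpha)\Lambda\to\alpha\Lambda$, $\beta\mapsto\alpha\beta$, in the symmetric inverse monoid $\mathcal{I}(\Lambda)$ (composition on largest possible domain, zero = empty map $0$), with inverse $\alpha^*:\alpha\beta\mapsto\beta$; $S_\Lambda$ is the inverse subsemigroup of $\mathcal{I}(\Lambda)$ generated by these maps, and $\alpha\beta^*$ denotes composition. *)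

theory Defs
  imports Main
begin

definition small_category ::
  "'m set \<Rightarrow> 'o set \<Rightarrow> ('m \<Rightarrow> 'o) \<Rightarrow> ('m \<Rightarrow> 'o) \<Rightarrow> ('m \<Rightarrow> 'm \<Rightarrow> 'm) \<Rightarrow> ('o \<Rightarrow> 'm) \<Rightarrow> bool"
  where
  "small_category L Ob r s cmp idm \<longleftrightarrow>
     (\<forall>f\<in>L. r f \<in> Ob \<and> s f \<in> Ob) \<and>
     (\<forall>f\<in>L. \<forall>g\<in>L. s f = r g \<longrightarrow>
        cmp f g \<in> L \<and> r (cmp f g) = r f \<and> s (cmp f g) = s g) \<and>
     (\<forall>f\<in>L. \<forall>g\<in>L. \<forall>h\<in>L. s f = r g \<longrightarrow> s g = r h \<longrightarrow>
        cmp (cmp f g) h = cmp f (cmp g h)) \<and>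
     (\<forall>x\<in>Ob. idm x \<in> L \<and> r (idm x) = x \<and> s (idm x) = x) \<and>
     (\<forall>f\<in>L. cmp (idm (r f)) f = f \<and> cmp f (idm (s f)) = f)"

definition left_cancellative ::
  "'m set \<Rightarrow> ('m \<Rightarrow> 'o) \<Rightarrow> ('m \<Rightarrow> 'o) \<Rightarrow> ('m \<Rightarrow> 'm \<Rightarrow> 'm) \<Rightarrow> bool" where
  "left_cancellative L r s cmp \<longleftrightarrow>
     (\<forall>a\<in>L. \<forall>b\<in>L. \<forall>c\<in>L. s a = r b \<longrightarrow> s a = r c \<longrightarrow> cmp a b = cmp a c \<longrightarrow> b = c)"

definition rset ::
  "'m set \<Rightarrow> ('m \<Rightarrow> 'o) \<Rightarrow> ('m \<Rightarrow> 'o) \<Rightarrow> ('m \<Rightarrow> 'm \<Rightarrow> 'm) \<Rightarrow> 'm \<Rightarrow> 'm set" where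
  "rset L r s cmp a = {cmp a b | b. b \<in> L \<and> s a = r b}"

definition singly_aligned ::
  "'m set \<Rightarrow> ('m \<Rightarrow> 'o) \<Rightarrow> ('m \<Rightarrow> 'o) \<Rightarrow> ('m \<Rightarrow> 'm \<Rightarrow> 'm) \<Rightarrow> bool" where
  "singly_aligned L r s cmp \<longleftrightarrow>
     (\<forall>a\<in>L. \<forall>b\<in>L. rset L r s cmp a \<inter> rset L r s cmp b = {} \<or>
        (\<exists>\<rho>\<in>L. rset L r s cmp a \<inter> rset L r s cmp b = rset L r s cmp \<rho>))"

definition invertible ::
  "'m set \<Rightarrow> ('m \<Rightarrow> 'o) \<Rightarrow> ('m \<Rightarrow> 'o) \<Rightarrow> ('m \<Rightarrow> 'm \<Rightarrow> 'm) \<Rightarrow> ('o \<Rightarrow> 'm) \<Rightarrow> 'm \<Rightarrow> bool" where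
  "invertible L r s cmp idm u \<longleftrightarrow>
     u \<in> L \<and> (\<exists>v\<in>L. s u = r v \<and> cmp u v = idm (r u))"

text \<open>The partial bijection s(a)\<Lambda> \<rightarrow> a\<Lambda>, b \<mapsto> a b, as a partial map on \<Lambda>.\<close>
definition emb ::
  "'m set \<Rightarrow> ('m \<Rightarrow> 'o) \<Rightarrow> ('m \<Rightarrow> 'o) \<Rightarrow> ('m \<Rightarrow> 'm \<Rightarrow> 'm) \<Rightarrow> 'm \<Rightarrow> ('m \<rightharpoonup> 'm)" where
  "emb L r s cmp a = (\<lambda>x. if x \<in> L \<and> r x = s a then Some (cmp a x) else None)"

text \<open>Inverse of a (injective) partial map.\<close>
definition pinv :: "('a \<rightharpoonup> 'a) \<Rightarrow> ('a \<rightharpoonup> 'a)" where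
  "pinv f = (\<lambda>y. if y \<in> ran f then Some (THE x. f x = Some y) else None)"

text \<open>Product in the symmetric inverse monoid: (f g)(x) = f (g x), on the largest possible
  domain (this is map composition); the zero is the empty map.\<close>

inductive_set S_Lambda ::
  "'m set \<Rightarrow> ('m \<Rightarrow> 'o) \<Rightarrow> ('m \<Rightarrow> 'o) \<Rightarrow> ('m \<Rightarrow> 'm \<Rightarrow> 'm) \<Rightarrow> ('m \<rightharpoonup> 'm) set"
  for L r s cmp where
  gen: "a \<in> L \<Longrightarrow> emb L r s cmp a \<in> S_Lambda L r s cmp"
| zero: "Map.empty \<in> S_Lambda L r s cmp"
| mult: "f \<in> S_Lambda L r s cmp \<Longrightarrow> g \<in> S_Lambda L r s cmp \<Longrightarrow> (f \<circ>\<^sub>m g) \<in> S_Lambda L r s cmp"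
| inv: "f \<in> S_Lambda L r s cmp \<Longrightarrow> pinv f \<in> S_Lambda L r s cmp"

end

theory Submission
  imports Defs
begin

lemma map_eqI_Some:
  assumes "\<And>y z. f y = Some z \<longleftrightarrow> g y = Some z"
  shows "f = g"
proof
  fix y
  show "f y = g y"
  proof (cases "f y")
    case None
    show ?thesis
    proof (cases "g y")
      case None then show ?thesis using \<open>f y = None\<close> by simp
    next
      case (Some w) then have "f y = Some w" using assms by blast
      then show ?thesis using \<open>f y = None\<close> by simp
    qed
  next
    case (Some w) then have "g y = Some w" using assms by blast
    then show ?thesis using \<open>f y = Some w\<close> by simp
  qed
qed

lemma pinv_Some_iff:
  assumes inj: "\<And>x1 x2 y. f x1 = Some y \<Longrightarrow> f x2 = Some y \<Longrightarrow> x1 = x2"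
  shows "pinv f y = Some x \<longleftrightarrow> f x = Some y"
proof
  assume h: "pinv f y = Some x"
  show "f x = Some y"
  proof (cases "y \<in> ran f")
    case True
    then obtain x0 where x0: "f x0 = Some y" unfolding ran_def by blast
    have T: "(THE x. f x = Some y) = x0" apply (rule the_equality) apply (rule x0) apply (erule inj) apply (rule x0) done
    have "pinv f y = Some (THE x. f x = Some y)" unfolding pinv_def using True by simp
    then have "x = x0" using h T by simp
    then show ?thesis using x0 by simp
  next
    case False
    then have "pinv f y = None" unfolding pinv_def by simp
    then show ?thesis using h by simp
  qed
next
  assume h: "f x = Some y"
  then have yr: "y \<in> ran f" unfolding ran_def by blast
  have T: "(THE x. f x = Some y) = x" apply (rule the_equality) apply (rule h) apply (erule inj) apply (rule h) done
  show "pinv f y = Some x" unfolding pinv_def using yr T by simp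
qed

locale catlc =
  fixes L :: "'m set" and Ob :: "'o set" and r s :: "'m \<Rightarrow> 'o"
    and cmp :: "'m \<Rightarrow> 'm \<Rightarrow> 'm" and idm :: "'o \<Rightarrow> 'm"
  assumes cat: "small_category L Ob r s cmp idm"
    and lc: "left_cancellative L r s cmp"
begin

abbreviation E where "E a \<equiv> emb L r s cmp a"
abbreviation F where "F a b \<equiv> E a \<circ>\<^sub>m pinv (E b)"

lemma catD: "(\<forall>f\<in>L. r f \<in> Ob \<and> s f \<in> Ob)"
  "(\<forall>f\<in>L. \<forall>g\<in>L. s f = r g \<longrightarrow>
        cmp f g \<in> L \<and> r (cmp f g) = r f \<and> s (cmp f g) = s g)"
  "(\<forall>f\<in>L. \<forall>g\<in>L. \<forall>h\<in>L. s f = r g \<longrightarrow> s g = r h \<longrightarrow>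
        cmp (cmp f g) h = cmp f (cmp g h))"
  "(\<forall>x\<in>Ob. idm x \<in> L \<and> r (idm x) = x \<and> s (idm x) = x)"
  "(\<forall>f\<in>L. cmp (idm (r f)) f = f \<and> cmp f (idm (s f)) = f)"
  using cat unfolding small_category_def by auto

lemma obL: "f \<in> L \<Longrightarrow> r f \<in> Ob" "f \<in> L \<Longrightarrow> s f \<in> Ob"
  using catD(1) by blast+
lemma cL: "f \<in> L \<Longrightarrow> g \<in> L \<Longrightarrow> s f = r g \<Longrightarrow> cmp f g \<in> L"
  and cr: "f \<in> L \<Longrightarrow> g \<in> L \<Longrightarrow> s f = r g \<Longrightarrow> r (cmp f g) = r f"
  and cs: "f \<in> L \<Longrightarrow> g \<in> L \<Longrightarrow> s f = r g \<Longrightarrow> s (cmp f g) = s g"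
  using catD(2) by blast+
lemma assoc: "f \<in> L \<Longrightarrow> g \<in> L \<Longrightarrow> h \<in> L \<Longrightarrow> s f = r g \<Longrightarrow> s g = r h \<Longrightarrow>
        cmp (cmp f g) h = cmp f (cmp g h)"
  using catD(3) by blast
lemma idL: "x \<in> Ob \<Longrightarrow> idm x \<in> L" and idr: "x \<in> Ob \<Longrightarrow> r (idm x) = x"
  and ids: "x \<in> Ob \<Longrightarrow> s (idm x) = x"
  using catD(4) by blast+
lemma idl1: "f \<in> L \<Longrightarrow> cmp (idm (r f)) f = f" and idr1: "f \<in> L \<Longrightarrow> cmp f (idm (s f)) = f"
  using catD(5) by blast+
lemma canc: "a \<in> L \<Longrightarrow> b \<in> L \<Longrightarrow> c \<in> L \<Longrightarrow> s a = r b \<Longrightarrow> s a = r c \<Longrightarrow> cmp a b = cmp a c \<Longrightarrow> b = c"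
  using lc unfolding left_cancellative_def by blast

lemma E_Some: "E a x = Some y \<longleftrightarrow> x \<in> L \<and> r x = s a \<and> y = cmp a x"
  unfolding emb_def by auto

lemma pinvE_Some: "a \<in> L \<Longrightarrow> pinv (E a) y = Some x \<longleftrightarrow> x \<in> L \<and> r x = s a \<and> y = cmp a x"
  by (subst pinv_Some_iff) (auto simp: E_Some intro: canc)

lemma F_Some: "a \<in> L \<Longrightarrow> b \<in> L \<Longrightarrow>
   F a b y = Some z \<longleftrightarrow> (\<exists>x. x \<in> L \<and> r x = s b \<and> y = cmp b x \<and> r x = s a \<and> z = cmp a x)"
  by (auto simp: map_comp_Some_iff pinvE_Some E_Some)

lemma gen_F: assumes a: "a \<in> L" shows "E a = F a (idm (s a))"
proof (rule map_eqI_Some)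
  fix y z
  have o: "s a \<in> Ob" using obL a by auto
  have i: "idm (s a) \<in> L" "s (idm (s a)) = s a" "r (idm (s a)) = s a"
    using idL[OF o] ids[OF o] idr[OF o] by auto
  have k: "\<And>x. x \<in> L \<Longrightarrow> r x = s a \<Longrightarrow> cmp (idm (s a)) x = x" using idl1 by force
  show "E a y = Some z \<longleftrightarrow> F a (idm (s a)) y = Some z"
    unfolding F_Some[OF a i(1)] E_Some using i k by auto
qed

lemma pinv_F: assumes "a \<in> L" "b \<in> L" "s a = s b" shows "pinv (F a b) = F b a"
proof (rule map_eqI_Some)
  fix y z
  have "pinv (F a b) y = Some z \<longleftrightarrow> F a b z = Some y"
    by (rule pinv_Some_iff) (auto simp: F_Some assms dest: canc[OF \<open>a \<in> L\<close>])
  then show "pinv (F a b) y = Some z \<longleftrightarrow> F b a y = Some z"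
    using assms by (auto simp: F_Some)
qed

lemma prod_empty:
  assumes "a \<in> L" "b \<in> L" "c \<in> L" "t \<in> L" "s a = s b" "s c = s t"
    and "rset L r s cmp b \<inter> rset L r s cmp c = {}"
  shows "F a b \<circ>\<^sub>m F c t = Map.empty"
proof (rule map_eqI_Some)
  fix y z
  have "\<not> (F a b \<circ>\<^sub>m F c t) y = Some z"
  proof
    assume "(F a b \<circ>\<^sub>m F c t) y = Some z"
    then obtain x1 x2 where x1: "x1 \<in> L" "r x1 = s c" and x2: "x2 \<in> L" "r x2 = s b"
       and e: "cmp c x1 = cmp b x2"
      using assms by (auto simp: map_comp_Some_iff pinvE_Some E_Some)
    have m1: "cmp c x1 \<in> rset L r s cmp c" unfolding rset_def using x1 by auto
    have m2: "cmp b x2 \<in> rset L r s cmp b" unfolding rset_def using x2 by auto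
    have "cmp c x1 \<in> rset L r s cmp b \<inter> rset L r s cmp c" using m1 m2 e by simp
    then show False using assms(7) by auto
  qed
  then show "(F a b \<circ>\<^sub>m F c t) y = Some z \<longleftrightarrow> Map.empty y = Some z" by simp
qed

lemma prod_formula:
  assumes a: "a \<in> L" and b: "b \<in> L" and c: "c \<in> L" and t: "t \<in> L"
    and ab: "s a = s b" and ct: "s c = s t"
    and \<rho>: "\<rho> \<in> L" and b1: "b1 \<in> L" and c1: "c1 \<in> L" and rb1: "r b1 = s b" and rc1: "r c1 = s c"
    and I: "rset L r s cmp b \<inter> rset L r s cmp c = rset L r s cmp \<rho>"
    and eb: "\<rho> = cmp b b1" and ec: "\<rho> = cmp c c1"
  shows "F a b \<circ>\<^sub>m F c t = F (cmp a b1) (cmp t c1)"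
proof (rule map_eqI_Some)
  fix y z
  have ab1: "cmp a b1 \<in> L" "s (cmp a b1) = s b1"
    using cL[OF a b1] cs[OF a b1] ab rb1 by auto
  have tc1: "cmp t c1 \<in> L" "s (cmp t c1) = s c1"
    using cL[OF t c1] cs[OF t c1] ct rc1 by auto
  have sr: "s \<rho> = s b1" "s \<rho> = s c1"
    using eb ec cs[OF b b1 rb1[symmetric]] cs[OF c c1 rc1[symmetric]] by auto
  have key: "cmp c (cmp c1 x) = cmp b (cmp b1 x) \<and> cmp t (cmp c1 x) = cmp (cmp t c1) x
     \<and> cmp a (cmp b1 x) = cmp (cmp a b1) x \<and> cmp \<rho> x = cmp c (cmp c1 x)
     \<and> cmp c1 x \<in> L \<and> r (cmp c1 x) = s c \<and> cmp b1 x \<in> L \<and> r (cmp b1 x) = s b"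
    if x: "x \<in> L" "r x = s \<rho>" for x
  proof -
    have sc1: "s c1 = r x" using sr x by simp
    have sb1: "s b1 = r x" using sr x by simp
    have 1: "cmp (cmp c c1) x = cmp c (cmp c1 x)" by (rule assoc[OF c c1 x(1) rc1[symmetric] sc1])
    have 2: "cmp (cmp b b1) x = cmp b (cmp b1 x)" by (rule assoc[OF b b1 x(1) rb1[symmetric] sb1])
    have 3: "cmp (cmp t c1) x = cmp t (cmp c1 x)" by (rule assoc[OF t c1 x(1) _ sc1]) (simp add: rc1 ct)
    have 4: "cmp (cmp a b1) x = cmp a (cmp b1 x)" by (rule assoc[OF a b1 x(1) _ sb1]) (simp add: rb1 ab)
    have 5: "cmp c1 x \<in> L" "r (cmp c1 x) = s c" using cL[OF c1 x(1) sc1] cr[OF c1 x(1) sc1] rc1 by auto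
    have 6: "cmp b1 x \<in> L" "r (cmp b1 x) = s b" using cL[OF b1 x(1) sb1] cr[OF b1 x(1) sb1] rb1 by auto
    have 7: "cmp \<rho> x = cmp c (cmp c1 x)" using 1 ec by simp
    have 8: "cmp \<rho> x = cmp b (cmp b1 x)" using 2 eb by simp
    show ?thesis using 3 4 5 6 7 8 by simp
  qed
  show "(F a b \<circ>\<^sub>m F c t) y = Some z \<longleftrightarrow> F (cmp a b1) (cmp t c1) y = Some z"
  proof
    assume "(F a b \<circ>\<^sub>m F c t) y = Some z"
    then obtain x1 x2 where x1: "x1 \<in> L" "r x1 = s t" "y = cmp t x1"
       and x2: "x2 \<in> L" "r x2 = s b" "z = cmp a x2" and e: "cmp c x1 = cmp b x2"
      using a b c t ab ct by (auto simp: map_comp_Some_iff pinvE_Some E_Some)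
    have m1: "cmp c x1 \<in> rset L r s cmp c" unfolding rset_def using x1 ct by auto
    have m2: "cmp b x2 \<in> rset L r s cmp b" unfolding rset_def using x2 by auto
    have "cmp c x1 \<in> rset L r s cmp b \<inter> rset L r s cmp c" using m1 m2 e by simp
    then obtain x where x: "x \<in> L" "s \<rho> = r x" "cmp c x1 = cmp \<rho> x"
      using I unfolding rset_def by auto
    have k: "cmp c (cmp c1 x) = cmp b (cmp b1 x) \<and> cmp t (cmp c1 x) = cmp (cmp t c1) x
     \<and> cmp a (cmp b1 x) = cmp (cmp a b1) x \<and> cmp \<rho> x = cmp c (cmp c1 x)
     \<and> cmp c1 x \<in> L \<and> r (cmp c1 x) = s c \<and> cmp b1 x \<in> L \<and> r (cmp b1 x) = s b"
      using key[OF x(1) x(2)[symmetric]] .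
    have 1: "x1 = cmp c1 x"
      by (rule canc[OF c x1(1)]) (use k x1 ct x in auto)
    have 2: "x2 = cmp b1 x"
      by (rule canc[OF b x2(1)]) (use k x2 e x 1 in auto)
    have xr: "r x = s c1" using x sr by simp
    show "F (cmp a b1) (cmp t c1) y = Some z"
      unfolding F_Some[OF ab1(1) tc1(1)]
      apply (rule exI[of _ x])
      using x(1) xr x1(3) x2(3) 1 2 k ab1(2) tc1(2) sr by simp
  next
    assume "F (cmp a b1) (cmp t c1) y = Some z"
    then obtain x where x: "x \<in> L" "r x = s c1" "y = cmp (cmp t c1) x" "z = cmp (cmp a b1) x"
      using ab1 tc1 by (auto simp: F_Some)
    have k: "cmp c (cmp c1 x) = cmp b (cmp b1 x) \<and> cmp t (cmp c1 x) = cmp (cmp t c1) x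
     \<and> cmp a (cmp b1 x) = cmp (cmp a b1) x \<and> cmp \<rho> x = cmp c (cmp c1 x)
     \<and> cmp c1 x \<in> L \<and> r (cmp c1 x) = s c \<and> cmp b1 x \<in> L \<and> r (cmp b1 x) = s b"
      using key[OF x(1)] x(2) sr by simp
    have "F c t y = Some (cmp c (cmp c1 x))"
      unfolding F_Some[OF c t] apply (rule exI[of _ "cmp c1 x"]) using k x ct by simp
    moreover have "F a b (cmp c (cmp c1 x)) = Some z"
      unfolding F_Some[OF a b] apply (rule exI[of _ "cmp b1 x"]) using k x ab by simp
    ultimately show "(F a b \<circ>\<^sub>m F c t) y = Some z"
      unfolding map_comp_Some_iff by blast
  qed
qed

lemma F_eq_iff:
  assumes a: "a \<in> L" and b: "b \<in> L" and c: "c \<in> L" and t: "t \<in> L"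
    and ab: "s a = s b" and ct: "s c = s t"
  shows "F a b = F c t \<longleftrightarrow> (\<exists>u. invertible L r s cmp idm u \<and> r u = s a \<and> cmp a u = c \<and> cmp b u = t)"
proof
  assume eq: "F a b = F c t"
  have "F c t t = Some c" unfolding F_Some[OF c t]
    using t idL idr ids obL idr1[OF c] idr1[OF t] ct by (intro exI[of _ "idm (s t)"]) auto
  then have "F a b t = Some c" using eq by simp
  then obtain u where u: "u \<in> L" "r u = s b" "t = cmp b u" "c = cmp a u"
    unfolding F_Some[OF a b] by auto
  have "F a b b = Some a" unfolding F_Some[OF a b]
    using b idL idr ids obL idr1[OF a] idr1[OF b] ab by (intro exI[of _ "idm (s b)"]) auto
  then have "F c t b = Some a" using eq by simp
  then obtain v where v: "v \<in> L" "r v = s t" "b = cmp t v" "a = cmp c v"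
    unfolding F_Some[OF c t] by auto
  have su: "s u = s t" using cs[OF b u(1)] u(2) u(3) by simp
  have suv: "s u = r v" using su v(2) by simp
  have uv: "cmp u v \<in> L" "r (cmp u v) = s b" using cL[OF u(1) v(1) suv] cr[OF u(1) v(1) suv] u(2) by auto
  have "cmp b (cmp u v) = cmp (cmp b u) v" using assoc[OF b u(1) v(1) u(2)[symmetric] suv] by simp
  also have "\<dots> = cmp t v" using u(3) by simp
  also have "\<dots> = b" using v(3) by simp
  also have "\<dots> = cmp b (idm (s b))" using idr1[OF b] by simp
  finally have bb: "cmp b (cmp u v) = cmp b (idm (s b))" .
  have ob: "s b \<in> Ob" using obL(2)[OF b] .
  have "cmp u v = idm (s b)"
    by (rule canc[OF b uv(1) idL[OF ob] _ _ bb]) (use uv idr[OF ob] in auto)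
  then have "cmp u v = idm (r u)" using u(2) by simp
  then have inv: "invertible L r s cmp idm u" unfolding invertible_def using u(1) v(1) suv by blast
  show "\<exists>u. invertible L r s cmp idm u \<and> r u = s a \<and> cmp a u = c \<and> cmp b u = t"
    apply (rule exI[of _ u]) using inv u(2) u(3) u(4) ab by simp
next
  assume "\<exists>u. invertible L r s cmp idm u \<and> r u = s a \<and> cmp a u = c \<and> cmp b u = t"
  then obtain u v where u: "u \<in> L" "r u = s a" "cmp a u = c" "cmp b u = t"
     and v: "v \<in> L" "s u = r v" "cmp u v = idm (r u)"
    unfolding invertible_def by auto
  have ru: "r u \<in> Ob" using obL(1)[OF u(1)] .
  have sv: "s v = r u" using cs[OF u(1) v(1) v(2)] v(3) ids[OF ru] by simp
  have st: "s t = s u" using u cs b ab by auto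
  show "F a b = F c t"
  proof (rule map_eqI_Some)
    fix y z
    show "F a b y = Some z \<longleftrightarrow> F c t y = Some z"
    proof
      assume "F a b y = Some z"
      then obtain x where x: "x \<in> L" "r x = s b" "y = cmp b x" "z = cmp a x"
        using a b by (auto simp: F_Some)
      have rx: "r x = r u" using x(2) u(2) ab by simp
      have svx: "s v = r x" using sv rx by simp
      have "cmp u (cmp v x) = cmp (cmp u v) x" using assoc[OF u(1) v(1) x(1) v(2) svx] by simp
      also have "\<dots> = cmp (idm (r x)) x" using v(3) rx by simp
      also have "\<dots> = x" using idl1[OF x(1)] .
      finally have uvx: "cmp u (cmp v x) = x" .
      have vx: "cmp v x \<in> L" "r (cmp v x) = s t"
        using cL[OF v(1) x(1) svx] cr[OF v(1) x(1) svx] v(2) st by auto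
      have sbu: "s b = r u" using u(2) ab by simp
      have suvx: "s u = r (cmp v x)" using vx(2) st by simp
      have sau: "s a = r u" using u(2) by simp
      have "y = cmp b (cmp u (cmp v x))" using x(3) uvx by simp
      also have "\<dots> = cmp (cmp b u) (cmp v x)" using assoc[OF b u(1) vx(1) sbu suvx] by simp
      also have "\<dots> = cmp t (cmp v x)" using u(4) by simp
      finally have yy: "y = cmp t (cmp v x)" .
      have "z = cmp a (cmp u (cmp v x))" using x(4) uvx by simp
      also have "\<dots> = cmp (cmp a u) (cmp v x)" using assoc[OF a u(1) vx(1) sau suvx] by simp
      also have "\<dots> = cmp c (cmp v x)" using u(3) by simp
      finally have zz: "z = cmp c (cmp v x)" .
      show "F c t y = Some z" unfolding F_Some[OF c t]
        apply (rule exI[of _ "cmp v x"]) using vx ct yy zz by simp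
    next
      assume "F c t y = Some z"
      then obtain x where x: "x \<in> L" "r x = s t" "y = cmp t x" "z = cmp c x"
        using c t by (auto simp: F_Some)
      have sux: "s u = r x" using x(2) st by simp
      have sbu: "s b = r u" using u(2) ab by simp
      have sau: "s a = r u" using u(2) by simp
      have ux: "cmp u x \<in> L" "r (cmp u x) = s b"
        using cL[OF u(1) x(1) sux] cr[OF u(1) x(1) sux] sbu by auto
      have "y = cmp (cmp b u) x" using x(3) u(4) by simp
      also have "\<dots> = cmp b (cmp u x)" using assoc[OF b u(1) x(1) sbu sux] .
      finally have yy: "y = cmp b (cmp u x)" .
      have "z = cmp (cmp a u) x" using x(4) u(3) by simp
      also have "\<dots> = cmp a (cmp u x)" using assoc[OF a u(1) x(1) sau sux] .
      finally have zz: "z = cmp a (cmp u x)" .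
      show "F a b y = Some z" unfolding F_Some[OF a b]
        apply (rule exI[of _ "cmp u x"]) using ux ab yy zz by simp
    qed
  qed
qed

lemma rho_in: assumes p: "\<rho> \<in> L" shows "\<rho> \<in> rset L r s cmp \<rho>"
proof -
  have o: "s \<rho> \<in> Ob" using obL(2)[OF p] .
  have "\<rho> = cmp \<rho> (idm (s \<rho>)) \<and> idm (s \<rho>) \<in> L \<and> s \<rho> = r (idm (s \<rho>))"
    using idr1[OF p] idL[OF o] idr[OF o] by simp
  then show ?thesis unfolding rset_def by blast
qed

lemma prod_in:
  assumes sa: "singly_aligned L r s cmp"
    and a: "a \<in> L" and b: "b \<in> L" and c: "c \<in> L" and t: "t \<in> L"
    and ab: "s a = s b" and ct: "s c = s t"
  shows "F a b \<circ>\<^sub>m F c t \<in> {F a b | a b. a \<in> L \<and> b \<in> L \<and> s a = s b} \<union> {Map.empty}"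
proof -
  have "rset L r s cmp b \<inter> rset L r s cmp c = {} \<or>
        (\<exists>\<rho>\<in>L. rset L r s cmp b \<inter> rset L r s cmp c = rset L r s cmp \<rho>)"
    using sa b c unfolding singly_aligned_def by blast
  then show ?thesis
  proof
    assume "rset L r s cmp b \<inter> rset L r s cmp c = {}"
    then show ?thesis using prod_empty[OF a b c t ab ct] by simp
  next
    assume "\<exists>\<rho>\<in>L. rset L r s cmp b \<inter> rset L r s cmp c = rset L r s cmp \<rho>"
    then obtain \<rho> where \<rho>: "\<rho> \<in> L" and I: "rset L r s cmp b \<inter> rset L r s cmp c = rset L r s cmp \<rho>"
      by blast
    have "\<rho> \<in> rset L r s cmp b" "\<rho> \<in> rset L r s cmp c" using rho_in[OF \<rho>] I by auto
    then obtain b1 c1 where b1: "b1 \<in> L" "s b = r b1" "\<rho> = cmp b b1"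
      and c1: "c1 \<in> L" "s c = r c1" "\<rho> = cmp c c1"
      unfolding rset_def by blast
    have e: "F a b \<circ>\<^sub>m F c t = F (cmp a b1) (cmp t c1)"
      by (rule prod_formula[OF a b c t ab ct \<rho> b1(1) c1(1) b1(2)[symmetric] c1(2)[symmetric] I b1(3) c1(3)])
    have "s (cmp a b1) = s b1" using cs[OF a b1(1)] ab b1(2) by simp
    also have "\<dots> = s \<rho>" using cs[OF b b1(1) b1(2)] b1(3) by simp
    also have "\<dots> = s c1" using cs[OF c c1(1) c1(2)] c1(3) by simp
    also have "\<dots> = s (cmp t c1)" using cs[OF t c1(1)] ct c1(2) by simp
    finally have ss: "s (cmp a b1) = s (cmp t c1)" .
    have "cmp a b1 \<in> L" using cL[OF a b1(1)] ab b1(2) by simp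
    moreover have "cmp t c1 \<in> L" using cL[OF t c1(1)] ct c1(2) by simp
    ultimately show ?thesis using e ss by blast
  qed
qed

lemma S_char:
  assumes sa: "singly_aligned L r s cmp"
  shows "S_Lambda L r s cmp = {F a b | a b. a \<in> L \<and> b \<in> L \<and> s a = s b} \<union> {Map.empty}"
proof
  show "S_Lambda L r s cmp \<subseteq> {F a b | a b. a \<in> L \<and> b \<in> L \<and> s a = s b} \<union> {Map.empty}"
  proof
    fix f assume "f \<in> S_Lambda L r s cmp"
    then show "f \<in> {F a b | a b. a \<in> L \<and> b \<in> L \<and> s a = s b} \<union> {Map.empty}"
    proof (induction rule: S_Lambda.induct)
      case (gen a)
      have o: "s a \<in> Ob" using obL(2)[OF gen] .
      have "E a = F a (idm (s a)) \<and> a \<in> L \<and> idm (s a) \<in> L \<and> s a = s (idm (s a))"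
        using gen_F[OF gen] idL[OF o] ids[OF o] gen by simp
      then show ?case by blast
    next
      case zero then show ?case by simp
    next
      case (mult f g)
      show ?case
      proof (cases "f = Map.empty \<or> g = Map.empty")
        case True then show ?thesis by auto
      next
        case False
        then obtain a b c t where "f = F a b" "a \<in> L" "b \<in> L" "s a = s b"
          "g = F c t" "c \<in> L" "t \<in> L" "s c = s t" using mult.IH by blast
        then show ?thesis using prod_in[OF sa] by simp
      qed
    next
      case (inv f)
      show ?case
      proof (cases "f = Map.empty")
        case True
        have "pinv Map.empty = (Map.empty :: 'm \<rightharpoonup> 'm)" unfolding pinv_def by simp
        then show ?thesis using True by simp
      next
        case False
        then obtain a b where "f = F a b" "a \<in> L" "b \<in> L" "s a = s b" using inv.IH by blast
        then have "pinv f = F b a \<and> b \<in> L \<and> a \<in> L \<and> s b = s a" using pinv_F by simp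
        then show ?thesis by blast
      qed
    qed
  qed
next
  show "{F a b | a b. a \<in> L \<and> b \<in> L \<and> s a = s b} \<union> {Map.empty} \<subseteq> S_Lambda L r s cmp"
    by (auto intro: S_Lambda.intros)
qed

end

theorem lemma4p11:
  fixes L :: "'m set" and Ob :: "'o set" and r s :: "'m \<Rightarrow> 'o"
    and cmp :: "'m \<Rightarrow> 'm \<Rightarrow> 'm" and idm :: "'o \<Rightarrow> 'm"
  assumes cat: "small_category L Ob r s cmp idm"
    and lc: "left_cancellative L r s cmp"
    and sa: "singly_aligned L r s cmp"
  shows
    "(S_Lambda L r s cmp =
       {emb L r s cmp a \<circ>\<^sub>m pinv (emb L r s cmp b) | a b. a \<in> L \<and> b \<in> L \<and> s a = s b}
       \<union> {Map.empty})
  \<and> (\<forall>a b c t. a \<in> L \<longrightarrow> b \<in> L \<longrightarrow> c \<in> L \<longrightarrow> t \<in> L \<longrightarrow> s a = s b \<longrightarrow> s c = s t \<longrightarrow>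
       ((emb L r s cmp a \<circ>\<^sub>m pinv (emb L r s cmp b) = emb L r s cmp c \<circ>\<^sub>m pinv (emb L r s cmp t))
       \<longleftrightarrow> (\<exists>u. invertible L r s cmp idm u \<and> r u = s a \<and> cmp a u = c \<and> cmp b u = t)))
  \<and> (\<forall>a b c t \<rho> b1 c1. a \<in> L \<longrightarrow> b \<in> L \<longrightarrow> c \<in> L \<longrightarrow> t \<in> L \<longrightarrow> s a = s b \<longrightarrow> s c = s t \<longrightarrow>
       \<rho> \<in> L \<longrightarrow> b1 \<in> L \<longrightarrow> c1 \<in> L \<longrightarrow> r b1 = s b \<longrightarrow> r c1 = s c \<longrightarrow>
       rset L r s cmp b \<inter> rset L r s cmp c = rset L r s cmp \<rho> \<longrightarrow>
       \<rho> = cmp b b1 \<longrightarrow> \<rho> = cmp c c1 \<longrightarrow>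
       (emb L r s cmp a \<circ>\<^sub>m pinv (emb L r s cmp b)) \<circ>\<^sub>m (emb L r s cmp c \<circ>\<^sub>m pinv (emb L r s cmp t))
       = emb L r s cmp (cmp a b1) \<circ>\<^sub>m pinv (emb L r s cmp (cmp t c1)))
  \<and> (\<forall>a b c t. a \<in> L \<longrightarrow> b \<in> L \<longrightarrow> c \<in> L \<longrightarrow> t \<in> L \<longrightarrow> s a = s b \<longrightarrow> s c = s t \<longrightarrow>
       \<not> (\<exists>\<rho>\<in>L. rset L r s cmp b \<inter> rset L r s cmp c = rset L r s cmp \<rho>) \<longrightarrow>
       (emb L r s cmp a \<circ>\<^sub>m pinv (emb L r s cmp b)) \<circ>\<^sub>m (emb L r s cmp c \<circ>\<^sub>m pinv (emb L r s cmp t))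
       = Map.empty)
  \<and> (\<forall>x. x \<in> S_Lambda L r s cmp \<longrightarrow> x \<circ>\<^sub>m (Map.empty :: 'm \<rightharpoonup> 'm) = Map.empty \<and> Map.empty \<circ>\<^sub>m x = Map.empty)"
proof -
  interpret catlc L Ob r s cmp idm using cat lc by unfold_locales
  show ?thesis
  proof (intro conjI allI impI)
    show "S_Lambda L r s cmp =
       {emb L r s cmp a \<circ>\<^sub>m pinv (emb L r s cmp b) | a b. a \<in> L \<and> b \<in> L \<and> s a = s b}
       \<union> {Map.empty}" using S_char[OF sa] .
  next
    fix a b c t assume "a \<in> L" "b \<in> L" "c \<in> L" "t \<in> L" "s a = s b" "s c = s t"
    then show "(emb L r s cmp a \<circ>\<^sub>m pinv (emb L r s cmp b) = emb L r s cmp c \<circ>\<^sub>m pinv (emb L r s cmp t))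
       \<longleftrightarrow> (\<exists>u. invertible L r s cmp idm u \<and> r u = s a \<and> cmp a u = c \<and> cmp b u = t)"
      by (rule F_eq_iff)
  next
    fix a b c t \<rho> b1 c1
    assume "a \<in> L" "b \<in> L" "c \<in> L" "t \<in> L" "s a = s b" "s c = s t"
       "\<rho> \<in> L" "b1 \<in> L" "c1 \<in> L" "r b1 = s b" "r c1 = s c"
       "rset L r s cmp b \<inter> rset L r s cmp c = rset L r s cmp \<rho>"
       "\<rho> = cmp b b1" "\<rho> = cmp c c1"
    then show "(emb L r s cmp a \<circ>\<^sub>m pinv (emb L r s cmp b)) \<circ>\<^sub>m (emb L r s cmp c \<circ>\<^sub>m pinv (emb L r s cmp t))
       = emb L r s cmp (cmp a b1) \<circ>\<^sub>m pinv (emb L r s cmp (cmp t c1))"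
      by (rule prod_formula)
  next
    fix a b c t
    assume h: "a \<in> L" "b \<in> L" "c \<in> L" "t \<in> L" "s a = s b" "s c = s t"
      and n: "\<not> (\<exists>\<rho>\<in>L. rset L r s cmp b \<inter> rset L r s cmp c = rset L r s cmp \<rho>)"
    have "rset L r s cmp b \<inter> rset L r s cmp c = {}"
      using sa h(2,3) n unfolding singly_aligned_def by blast
    then show "(emb L r s cmp a \<circ>\<^sub>m pinv (emb L r s cmp b)) \<circ>\<^sub>m (emb L r s cmp c \<circ>\<^sub>m pinv (emb L r s cmp t))
       = Map.empty" by (rule prod_empty[OF h])
  next
    fix x :: "'m \<rightharpoonup> 'm"
    show "x \<circ>\<^sub>m Map.empty = Map.empty" by simp
  next
    fix x :: "'m \<rightharpoonup> 'm"
    show "Map.empty \<circ>\<^sub>m x = Map.empty" by simp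
  qed
qed

end
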